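(* Let $\Sigma\in\mathbb{R}^{n\times n}$ be positive semidefinite, $\Sigma_\Omega$ a best $k$-sparse approximation of $\Sigma$ and $\Sigma_{\Omega^c}=\Sigma-\Sigma_\Omega$. Let $\eta\in\mathbb{R}^{2m}$ with $\|\eta\|_1\le\epsilon_1$, $y=\mathcal A(\Sigma)+\eta$, and let $\hat\Sigma$ be any minimizer of $\min_M\|M\|_1$ subject to $M\succeq0$, $\|y-\mathcal A(M)\|_1\le\epsilon_1$. If there is an integer $K_2>2k$ with $$\frac{1-\gamma^{\mathrm{lb}}_{k+K_2}}{\sqrt2}-(1+\gamma^{\mathrm{ub}}_{K_2})\sqrt{\frac{k}{K_2}}\ge\beta_2>0,$$ then $$\|\hat\Sigma-\Sigma\|_{\mathrm F}\le\Big(\frac{C_1}{\beta_2}+C_3\Big)\frac{\|\Sigma_{\Omega^c}\|_1}{\sqrt{K_2}}+\frac{C_2}{\beta_2}\cdot\frac{\epsilon_1}{m}$$ for positive constants $C_1,C_2,C_3$ depending only on the RIP-$\ell_2/\ell_1$ constants.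
   Context: Fixed vectors $a_1,\dots,a_{2m}\in\mathbb{R}^n$; $A_i=a_ia_i^\top$; $\mathcal A(M)=(\langle A_i,M\rangle)_{i=1}^{2m}$; $B_i=A_{2i-1}-A_{2i}$; $\mathcal B(X)=(\langle B_i,X\rangle)_{i=1}^m$. $\|M\|_1$ is the entrywise $\ell_1$ norm. A best $k$-sparse approximation keeps the $k$ largest-magnitude entries. RIP-$\ell_2/\ell_1$ constants $\gamma_k^{\mathrm{lb}},\gamma_k^{\mathrm{ub}}$: the smallest numbers such that $(1-\gamma_k^{\mathrm{lb}})\|X\|_{\mathrm F}\le\frac1m\|\mathcal B(X)\|_1\le(1+\gamma_k^{\mathrm{ub}})\|X\|_{\mathrm F}$ for all symmetric $X$ with at most $k$ nonzero entries. *)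

theory Defs
  imports Complex_Main
begin

text \<open>Explicit carriers: vectors in R^n are functions nat \<Rightarrow> real (indices < n),
 n x n matrices are functions nat \<Rightarrow> nat \<Rightarrow> real (indices < n).
 The measurement vectors are a i, i = 1..2m.\<close>

definition Aop :: "nat \<Rightarrow> (nat \<Rightarrow> nat \<Rightarrow> real) \<Rightarrow> (nat \<Rightarrow> nat \<Rightarrow> real) \<Rightarrow> nat \<Rightarrow> real" where
  "Aop n a M i = (\<Sum>p<n. \<Sum>q<n. a i p * a i q * M p q)"

definition Bop :: "nat \<Rightarrow> (nat \<Rightarrow> nat \<Rightarrow> real) \<Rightarrow> (nat \<Rightarrow> nat \<Rightarrow> real) \<Rightarrow> nat \<Rightarrow> real" where
  "Bop n a X i = Aop n a X (2 * i - 1) - Aop n a X (2 * i)"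

definition Bnorm1 :: "nat \<Rightarrow> nat \<Rightarrow> (nat \<Rightarrow> nat \<Rightarrow> real) \<Rightarrow> (nat \<Rightarrow> nat \<Rightarrow> real) \<Rightarrow> real" where
  "Bnorm1 n m a X = (\<Sum>i = 1..m. \<bar>Bop n a X i\<bar>)"

definition entry_l1 :: "nat \<Rightarrow> (nat \<Rightarrow> nat \<Rightarrow> real) \<Rightarrow> real" where
  "entry_l1 n M = (\<Sum>p<n. \<Sum>q<n. \<bar>M p q\<bar>)"

definition frob :: "nat \<Rightarrow> (nat \<Rightarrow> nat \<Rightarrow> real) \<Rightarrow> real" where
  "frob n M = sqrt (\<Sum>p<n. \<Sum>q<n. (M p q)^2)"

definition symm :: "nat \<Rightarrow> (nat \<Rightarrow> nat \<Rightarrow> real) \<Rightarrow> bool" where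
  "symm n X \<longleftrightarrow> (\<forall>p<n. \<forall>q<n. X p q = X q p)"

definition psd :: "nat \<Rightarrow> (nat \<Rightarrow> nat \<Rightarrow> real) \<Rightarrow> bool" where
  "psd n M \<longleftrightarrow> symm n M \<and> (\<forall>x :: nat \<Rightarrow> real. 0 \<le> (\<Sum>p<n. \<Sum>q<n. x p * M p q * x q))"

definition nnz :: "nat \<Rightarrow> (nat \<Rightarrow> nat \<Rightarrow> real) \<Rightarrow> nat" where
  "nnz n X = card {(p, q). p < n \<and> q < n \<and> X p q \<noteq> 0}"

definition rip_lb :: "nat \<Rightarrow> nat \<Rightarrow> (nat \<Rightarrow> nat \<Rightarrow> real) \<Rightarrow> nat \<Rightarrow> real" where
  "rip_lb n m a k = Inf {g. \<forall>X. symm n X \<and> nnz n X \<le> k \<longrightarrow>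
      (1 - g) * frob n X \<le> Bnorm1 n m a X / real m}"

definition rip_ub :: "nat \<Rightarrow> nat \<Rightarrow> (nat \<Rightarrow> nat \<Rightarrow> real) \<Rightarrow> nat \<Rightarrow> real" where
  "rip_ub n m a k = Inf {g. \<forall>X. symm n X \<and> nnz n X \<le> k \<longrightarrow>
      Bnorm1 n m a X / real m \<le> (1 + g) * frob n X}"

definition best_k_sparse :: "nat \<Rightarrow> nat \<Rightarrow> (nat \<Rightarrow> nat \<Rightarrow> real) \<Rightarrow> (nat \<Rightarrow> nat \<Rightarrow> real) \<Rightarrow> bool" where
  "best_k_sparse n k S SOm \<longleftrightarrow> (\<exists>Om. Om \<subseteq> {..<n} \<times> {..<n} \<and> card Om = min k (n * n) \<and>
      (\<forall>(p, q) \<in> Om. \<forall>(p', q') \<in> ({..<n} \<times> {..<n}) - Om. \<bar>S p' q'\<bar> \<le> \<bar>S p q\<bar>) \<and>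
      (\<forall>p q. SOm p q = (if (p, q) \<in> Om then S p q else 0)))"

definition feasible :: "nat \<Rightarrow> nat \<Rightarrow> (nat \<Rightarrow> nat \<Rightarrow> real) \<Rightarrow> (nat \<Rightarrow> real) \<Rightarrow> real \<Rightarrow> (nat \<Rightarrow> nat \<Rightarrow> real) \<Rightarrow> bool" where
  "feasible n m a y eps M \<longleftrightarrow> psd n M \<and> (\<Sum>i = 1..2 * m. \<bar>y i - Aop n a M i\<bar>) \<le> eps"

end

theory Submission
  imports Defs "HOL-Analysis.L2_Norm"
begin


definition Ip :: "nat \<Rightarrow> (nat \<times> nat) set" where "Ip n = {..<n} \<times> {..<n}"
definition vf :: "(nat \<Rightarrow> nat \<Rightarrow> real) \<Rightarrow> nat \<times> nat \<Rightarrow> real" where "vf M x = M (fst x) (snd x)"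
definition restr :: "(nat \<Rightarrow> nat \<Rightarrow> real) \<Rightarrow> (nat \<times> nat) set \<Rightarrow> nat \<Rightarrow> nat \<Rightarrow> real" where
  "restr H T = (\<lambda>p q. if (p, q) \<in> T then H p q else 0)"
definition l1s :: "(nat \<Rightarrow> nat \<Rightarrow> real) \<Rightarrow> (nat \<times> nat) set \<Rightarrow> real" where
  "l1s H T = (\<Sum>x\<in>T. \<bar>vf H x\<bar>)"
definition sc :: "(nat \<times> nat) set \<Rightarrow> bool" where "sc T \<longleftrightarrow> (\<forall>p q. (p, q) \<in> T \<longrightarrow> (q, p) \<in> T)"

lemma finite_Ip[simp]: "finite (Ip n)" by (simp add: Ip_def)

lemma frob_L2: "frob n M = L2_set (vf M) (Ip n)"
  unfolding frob_def L2_set_def Ip_def vf_def by (simp add: sum.cartesian_product split_def)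

lemma l1_sum: "entry_l1 n M = l1s M (Ip n)"
  unfolding entry_l1_def l1s_def Ip_def vf_def by (simp add: sum.cartesian_product split_def)

lemma frob_nonneg: "0 \<le> frob n M" by (simp add: frob_L2)

lemma frob_restr: assumes "T \<subseteq> Ip n" shows "frob n (restr H T) = L2_set (vf H) T"
proof -
  have "frob n (restr H T) = sqrt (\<Sum>x\<in>Ip n. (if x \<in> T then (vf H x)^2 else 0))"
    unfolding frob_L2 L2_set_def by (intro arg_cong[where f=sqrt] sum.cong) (auto simp: vf_def restr_def)
  also have "\<dots> = sqrt (\<Sum>x\<in>Ip n \<inter> T. (vf H x)^2)" by (simp add: sum.inter_restrict)
  also have "Ip n \<inter> T = T" using assms by auto
  finally show ?thesis by (simp add: L2_set_def)
qed

lemma l1s_restr: "l1s (restr H T) (Ip n) = l1s H (Ip n \<inter> T)"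
proof -
  have "l1s (restr H T) (Ip n) = (\<Sum>x\<in>Ip n. (if x \<in> T then \<bar>vf H x\<bar> else 0))"
    unfolding l1s_def by (intro sum.cong) (auto simp: vf_def restr_def)
  also have "\<dots> = (\<Sum>x\<in>Ip n \<inter> T. \<bar>vf H x\<bar>)" by (simp add: sum.inter_restrict)
  finally show ?thesis by (simp add: l1s_def)
qed

lemma frob_cong: "(\<And>p q. p < n \<Longrightarrow> q < n \<Longrightarrow> X p q = Y p q) \<Longrightarrow> frob n X = frob n Y"
  unfolding frob_def by simp

lemma Aop_cong: "(\<And>p q. p < n \<Longrightarrow> q < n \<Longrightarrow> X p q = Y p q) \<Longrightarrow> Aop n a X i = Aop n a Y i"
  unfolding Aop_def by simp

lemma Bnorm1_cong: "(\<And>p q. p < n \<Longrightarrow> q < n \<Longrightarrow> X p q = Y p q) \<Longrightarrow> Bnorm1 n m a X = Bnorm1 n m a Y"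
  unfolding Bnorm1_def Bop_def using Aop_cong[of n X Y] by simp

lemma frob_add: "frob n (\<lambda>p q. X p q + Y p q) \<le> frob n X + frob n Y"
proof -
  have "frob n (\<lambda>p q. X p q + Y p q) = L2_set (\<lambda>x. vf X x + vf Y x) (Ip n)"
    by (simp add: frob_L2 vf_def[abs_def])
  also have "\<dots> \<le> L2_set (vf X) (Ip n) + L2_set (vf Y) (Ip n)" by (rule L2_set_triangle_ineq)
  finally show ?thesis by (simp add: frob_L2)
qed

lemma Aop_add: "Aop n a (\<lambda>p q. X p q + Y p q) i = Aop n a X i + Aop n a Y i"
  unfolding Aop_def by (simp add: algebra_simps sum.distrib)
lemma Aop_diff: "Aop n a (\<lambda>p q. X p q - Y p q) i = Aop n a X i - Aop n a Y i"
  unfolding Aop_def by (simp add: algebra_simps sum_subtractf)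

lemma Bnorm1_nonneg: "0 \<le> Bnorm1 n m a X" unfolding Bnorm1_def by (simp add: sum_nonneg)

lemma Bnorm1_add: "Bnorm1 n m a (\<lambda>p q. X p q + Y p q) \<le> Bnorm1 n m a X + Bnorm1 n m a Y"
  unfolding Bnorm1_def Bop_def Aop_add sum.distrib[symmetric]
  by (intro sum_mono) linarith
lemma Bnorm1_diff: "Bnorm1 n m a (\<lambda>p q. X p q - Y p q) \<le> Bnorm1 n m a X + Bnorm1 n m a Y"
  unfolding Bnorm1_def Bop_def Aop_diff sum.distrib[symmetric]
  by (intro sum_mono) linarith

lemma symm_restr: assumes "symm n H" "sc T" shows "symm n (restr H T)"
  using assms unfolding symm_def sc_def restr_def by metis

lemma nnz_restr: assumes "T \<subseteq> Ip n" shows "nnz n (restr H T) \<le> card T"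
proof -
  have "{(p, q). p < n \<and> q < n \<and> restr H T p q \<noteq> 0} \<subseteq> T" by (auto simp: restr_def split: if_splits)
  moreover have "finite T" using assms by (meson finite_Ip finite_subset)
  ultimately show ?thesis unfolding nnz_def by (rule card_mono[rotated])
qed

lemma nnz_le: "nnz n X \<le> n * n"
proof -
  have "{(p, q). p < n \<and> q < n \<and> X p q \<noteq> 0} \<subseteq> Ip n" by (auto simp: Ip_def)
  hence "nnz n X \<le> card (Ip n)" unfolding nnz_def by (intro card_mono) auto
  thus ?thesis by (simp add: Ip_def)
qed

lemma abs_le_frob: assumes "p < n" "q < n" shows "\<bar>X p q\<bar> \<le> frob n X"
proof -
  have "(\<lambda>x. \<bar>vf X x\<bar>) (p,q) \<le> L2_set (\<lambda>x. \<bar>vf X x\<bar>) (Ip n)"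
    by (rule member_le_L2_set) (use assms in \<open>auto simp: Ip_def\<close>)
  moreover have "L2_set (\<lambda>x. \<bar>vf X x\<bar>) (Ip n) = L2_set (vf X) (Ip n)" by (simp add: L2_set_def)
  ultimately show ?thesis by (simp add: frob_L2 vf_def)
qed

lemma Aop_bound: "\<bar>Aop n a X i\<bar> \<le> (\<Sum>p<n. \<Sum>q<n. \<bar>a i p * a i q\<bar>) * frob n X"
proof -
  have "\<bar>Aop n a X i\<bar> \<le> (\<Sum>p<n. \<Sum>q<n. \<bar>a i p * a i q * X p q\<bar>)"
    unfolding Aop_def by (rule order_trans[OF sum_abs], intro sum_mono sum_abs)
  also have "\<dots> \<le> (\<Sum>p<n. \<Sum>q<n. \<bar>a i p * a i q\<bar> * frob n X)"
    by (intro sum_mono) (auto simp: abs_mult intro!: mult_left_mono abs_le_frob)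
  finally show ?thesis by (simp add: sum_distrib_right)
qed

lemma Bnorm1_bound: "\<exists>C\<ge>0. \<forall>X. Bnorm1 n m a X \<le> C * frob n X"
proof -
  define c where "c i = (\<Sum>p<n. \<Sum>q<n. \<bar>a i p * a i q\<bar>)" for i
  define C where "C = (\<Sum>i=1..m. c (2*i-1) + c (2*i))"
  have "C \<ge> 0" unfolding C_def c_def by (intro sum_nonneg add_nonneg_nonneg) auto
  moreover have "Bnorm1 n m a X \<le> C * frob n X" for X
  proof -
    have "Bnorm1 n m a X \<le> (\<Sum>i=1..m. (c (2*i-1) + c (2*i)) * frob n X)"
      unfolding Bnorm1_def Bop_def
    proof (intro sum_mono)
      fix i
      show "\<bar>Aop n a X (2 * i - 1) - Aop n a X (2 * i)\<bar> \<le> (c (2 * i - 1) + c (2 * i)) * frob n X"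
        using Aop_bound[of n a X "2*i-1"] Aop_bound[of n a X "2*i"] unfolding c_def
        by (simp add: algebra_simps)
    qed
    thus ?thesis by (simp add: C_def sum_distrib_right)
  qed
  ultimately show ?thesis by blast
qed

lemma rip_lb_prop: assumes "symm n X" "nnz n X \<le> k"
  shows "(1 - rip_lb n m a k) * frob n X \<le> Bnorm1 n m a X / real m"
proof -
  define G where "G = {g. \<forall>X. symm n X \<and> nnz n X \<le> k \<longrightarrow> (1 - g) * frob n X \<le> Bnorm1 n m a X / real m}"
  have lb: "rip_lb n m a k = Inf G" by (simp add: rip_lb_def G_def)
  have B0: "0 \<le> Bnorm1 n m a X / real m" for X by (simp add: Bnorm1_nonneg)
  have "1 \<in> G" unfolding G_def using B0 by simp
  show ?thesis
  proof (cases "frob n X = 0")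
    case True then show ?thesis using B0 by simp
  next
    case False
    hence fp: "frob n X > 0" using frob_nonneg[of n X] by simp
    have "1 - Bnorm1 n m a X / real m / frob n X \<le> Inf G"
    proof (rule cInf_greatest)
      show "G \<noteq> {}" using \<open>1 \<in> G\<close> by auto
      fix g assume "g \<in> G"
      hence "(1 - g) * frob n X \<le> Bnorm1 n m a X / real m" using assms unfolding G_def by blast
      thus "1 - Bnorm1 n m a X / real m / frob n X \<le> g" using fp pos_le_divide_eq[of "frob n X" "1-g" "Bnorm1 n m a X / real m"] by linarith
    qed
    thus ?thesis using fp unfolding lb using pos_le_divide_eq[of "frob n X" "1 - Inf G" "Bnorm1 n m a X / real m"] by linarith
  qed
qed

lemma rip_ub_prop: assumes "symm n X" "nnz n X \<le> k"
  shows "Bnorm1 n m a X / real m \<le> (1 + rip_ub n m a k) * frob n X"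
proof -
  define G where "G = {g. \<forall>X. symm n X \<and> nnz n X \<le> k \<longrightarrow> Bnorm1 n m a X / real m \<le> (1 + g) * frob n X}"
  have ub: "rip_ub n m a k = Inf G" by (simp add: rip_ub_def G_def)
  obtain C where C: "C \<ge> 0" "\<And>X. Bnorm1 n m a X \<le> C * frob n X" using Bnorm1_bound by blast
  have Bm: "Bnorm1 n m a X / real m \<le> Bnorm1 n m a X" for X
  proof (cases "m = 0")
    case False
    hence "real m \<ge> 1" by simp
    thus ?thesis using Bnorm1_nonneg[of n m a X] divide_left_mono[of 1 "real m" "Bnorm1 n m a X"] by simp
  qed (simp add: Bnorm1_nonneg)
  have "C \<in> G" unfolding G_def
  proof (intro CollectI allI impI)
    fix X
    have "Bnorm1 n m a X / real m \<le> C * frob n X" using Bm C(2) order_trans by blast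
    also have "\<dots> \<le> (1 + C) * frob n X" using frob_nonneg[of n X] by (simp add: algebra_simps)
    finally show "Bnorm1 n m a X / real m \<le> (1 + C) * frob n X" .
  qed
  show ?thesis
  proof (cases "frob n X = 0")
    case True
    hence "Bnorm1 n m a X = 0" using C(2)[of X] Bnorm1_nonneg[of n m a X] by simp
    then show ?thesis using True by simp
  next
    case False
    hence fp: "frob n X > 0" using frob_nonneg[of n X] by simp
    have "Bnorm1 n m a X / real m / frob n X - 1 \<le> Inf G"
    proof (rule cInf_greatest)
      show "G \<noteq> {}" using \<open>C \<in> G\<close> by auto
      fix g assume "g \<in> G"
      hence "Bnorm1 n m a X / real m \<le> (1 + g) * frob n X" using assms unfolding G_def by blast
      thus "Bnorm1 n m a X / real m / frob n X - 1 \<le> g" using fp pos_divide_le_eq[of "frob n X" "Bnorm1 n m a X / real m" "1+g"] by linarith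
    qed
    thus ?thesis using fp unfolding ub using pos_divide_le_eq[of "frob n X" "Bnorm1 n m a X / real m" "1 + Inf G"] by linarith
  qed
qed

lemma top_sel:
  fixes f :: "nat \<times> nat \<Rightarrow> real"
  assumes "finite R" "sc R" "\<And>p q. (p, q) \<in> R \<Longrightarrow> f (q, p) = f (p, q)"
  shows "\<exists>T\<subseteq>R. sc T \<and> card T \<le> j \<and> (T = R \<or> j \<le> card T + 1) \<and> (\<forall>x\<in>T. \<forall>y\<in>R-T. f y \<le> f x)"
proof (induction j)
  case 0
  show ?case by (rule exI[of _ "{}"]) (auto simp: sc_def)
next
  case (Suc j)
  then obtain T where T: "T \<subseteq> R" "sc T" "card T \<le> j" "T = R \<or> j \<le> card T + 1"
    "\<forall>x\<in>T. \<forall>y\<in>R-T. f y \<le> f x" by blast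
  show ?case
  proof (cases "T = R \<or> j \<le> card T")
    case True
    then show ?thesis using T by (intro exI[of _ T]) auto
  next
    case False
    hence TR: "T \<noteq> R" and cT: "card T + 1 = j" using T by auto
    have ne: "R - T \<noteq> {}" using T(1) TR by auto
    have fin: "finite (R - T)" using assms(1) by auto
    define M where "M = Max (f ` (R - T))"
    have "M \<in> f ` (R - T)" unfolding M_def using fin ne by (intro Max_in) auto
    then obtain x where x: "x \<in> R - T" "f x = M" by auto
    have xmax: "\<forall>y\<in>R-T. f y \<le> f x" using fin x unfolding M_def by auto
    obtain p q where pq: "x = (p, q)" by fastforce
    have qpR: "(q, p) \<in> R" using x(1) assms(2) pq unfolding sc_def by auto
    have qpT: "(q, p) \<notin> T" using x(1) T(2) pq unfolding sc_def by auto
    have finT: "finite T" using T(1) assms(1) finite_subset by blast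
    define T' where "T' = T \<union> {(p, q), (q, p)}"
    have c0: "card (insert (q,p) T) \<le> Suc (card T)" using finT by (simp add: card_insert_if)
    have c0': "card (insert (p,q) (insert (q,p) T)) \<le> Suc (card (insert (q,p) T))" using finT by (simp add: card_insert_if)
    have c1: "card T' \<le> card T + 2" unfolding T'_def using c0 c0' by simp
    have c2: "card T + 1 \<le> card T'"
    proof -
      have "card (insert (p,q) T) = Suc (card T)" using finT x(1) pq by simp
      moreover have "card (insert (p,q) T) \<le> card T'" unfolding T'_def using finT by (intro card_mono) auto
      ultimately show ?thesis by simp
    qed
    have sub: "T' \<subseteq> R" unfolding T'_def using T(1) x(1) pq qpR by auto
    have scT': "sc T'" using T(2) unfolding T'_def sc_def by auto
    have top: "\<forall>z\<in>T'. \<forall>y\<in>R-T'. f y \<le> f z"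
    proof (intro ballI)
      fix z y assume z: "z \<in> T'" and y: "y \<in> R - T'"
      hence yRT: "y \<in> R - T" unfolding T'_def by auto
      show "f y \<le> f z"
      proof (cases "z \<in> T")
        case True then show ?thesis using T(5) yRT by auto
      next
        case False
        hence "z = (p, q) \<or> z = (q, p)" using z unfolding T'_def by auto
        moreover have "f (q, p) = f (p, q)" using assms(3) x(1) pq by auto
        ultimately show ?thesis using xmax yRT pq by auto
      qed
    qed
    show ?thesis using c1 c2 cT sub scT' top by (intro exI[of _ T']) auto
  qed
qed

lemma sqrt_bound_aux:
  assumes "0 \<le> A" "0 \<le> l" "0 \<le> s" "s \<le> A * l / d" "d > 0"
  shows "sqrt s \<le> (A + l) / (2 * sqrt d)"
proof -
  have e: "((A + l) / 2)^2 - A * l = ((A - l) / 2)^2" by (simp add: power2_eq_square field_simps)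
  have "A * l \<le> ((A + l) / 2)^2" using e zero_le_power2[of "(A - l) / 2"] by linarith
  hence "A * l / d \<le> ((A + l) / 2)^2 / d" using assms(5) by (intro divide_right_mono) auto
  hence "s \<le> ((A + l) / 2)^2 / d" using assms(4) by linarith
  also have "\<dots> = ((A + l) / (2 * sqrt d))^2" using assms by (simp add: power_divide power_mult_distrib)
  finally have "sqrt s \<le> sqrt (((A + l) / (2 * sqrt d))^2)" by (rule real_sqrt_le_mono)
  also have "\<dots> = (A + l) / (2 * sqrt d)" using assms by simp
  finally show ?thesis .
qed

lemma restr_split:
  assumes "T \<subseteq> R" shows "restr H R = (\<lambda>p q. restr H T p q + restr H (R - T) p q)"
  using assms by (auto simp: restr_def fun_eq_iff)

lemma l1s_split:
  assumes "finite R" "T \<subseteq> R" shows "l1s H R = l1s H T + l1s H (R - T)"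
  unfolding l1s_def using sum.subset_diff[OF assms(2) assms(1), of "\<lambda>x. \<bar>vf H x\<bar>"] by linarith

lemma l1s_nonneg: "0 \<le> l1s H T" unfolding l1s_def by (simp add: sum_nonneg)

lemma chain:
  assumes K: "K \<ge> 2" and Hs: "symm n H" and g: "0 \<le> 1 + \<gamma>"
    and rip: "\<And>X. symm n X \<Longrightarrow> nnz n X \<le> K \<Longrightarrow> Bnorm1 n m a X / real m \<le> (1 + \<gamma>) * frob n X"
  shows "R \<subseteq> Ip n \<Longrightarrow> sc R \<Longrightarrow> 0 \<le> A \<Longrightarrow> (\<forall>x\<in>R. \<bar>vf H x\<bar> \<le> A / (real K - 1)) \<Longrightarrow>
    frob n (restr H R) \<le> (A / 2 + l1s H R) / sqrt (real K - 1) \<and>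
    Bnorm1 n m a (restr H R) / real m \<le> (1 + \<gamma>) * ((A / 2 + l1s H R) / sqrt (real K - 1))"
proof (induction "card R" arbitrary: R A rule: less_induct)
  case less
  note R = less.prems
  define D where "D = sqrt (real K - 1)"
  have Kr: "real K - 1 > 0" using K by simp
  have Dp: "D > 0" unfolding D_def using Kr by simp
  have finR: "finite R" using R(1) finite_subset finite_Ip by blast
  have fsym: "\<And>p q. (p, q) \<in> R \<Longrightarrow> \<bar>vf H (q, p)\<bar> = \<bar>vf H (p, q)\<bar>"
    using R(1) Hs unfolding symm_def vf_def Ip_def by auto
  obtain T where T: "T \<subseteq> R" "sc T" "card T \<le> K" "T = R \<or> K \<le> card T + 1"
    "\<forall>x\<in>T. \<forall>y\<in>R-T. \<bar>vf H y\<bar> \<le> \<bar>vf H x\<bar>"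
    using top_sel[OF finR R(2), of "\<lambda>x. \<bar>vf H x\<bar>" K] fsym by blast
  have TI: "T \<subseteq> Ip n" using T(1) R(1) by auto
  have finT: "finite T" using T(1) finR finite_subset by blast
  define l where "l = l1s H T"
  have l0: "0 \<le> l" unfolding l_def by (rule l1s_nonneg)
  have sqT: "(\<Sum>x\<in>T. (vf H x)^2) \<le> A * l / (real K - 1)"
  proof -
    have "(\<Sum>x\<in>T. (vf H x)^2) \<le> (\<Sum>x\<in>T. A / (real K - 1) * \<bar>vf H x\<bar>)"
    proof (intro sum_mono)
      fix x assume "x \<in> T"
      hence "\<bar>vf H x\<bar> \<le> A / (real K - 1)" using R(4) T(1) by auto
      hence "\<bar>vf H x\<bar> * \<bar>vf H x\<bar> \<le> A / (real K - 1) * \<bar>vf H x\<bar>" by (intro mult_right_mono) auto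
      thus "(vf H x)^2 \<le> A / (real K - 1) * \<bar>vf H x\<bar>" by (simp add: power2_eq_square abs_mult_self_eq)
    qed
    also have "\<dots> = A / (real K - 1) * l" unfolding l_def l1s_def by (rule sum_distrib_left[symmetric])
    also have "\<dots> = A * l / (real K - 1)" by simp
    finally show ?thesis .
  qed
  have FT: "frob n (restr H T) \<le> (A + l) / (2 * D)"
    unfolding frob_restr[OF TI] L2_set_def D_def
    by (rule sqrt_bound_aux[OF R(3) l0 _ sqT Kr]) (simp add: sum_nonneg)
  have BT: "Bnorm1 n m a (restr H T) / real m \<le> (1 + \<gamma>) * ((A + l) / (2 * D))"
  proof -
    have "Bnorm1 n m a (restr H T) / real m \<le> (1 + \<gamma>) * frob n (restr H T)"
      using rip[OF symm_restr[OF Hs T(2)]] nnz_restr[OF TI, of H] T(3) by simp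
    also have "\<dots> \<le> (1 + \<gamma>) * ((A + l) / (2 * D))" using FT g by (intro mult_left_mono) auto
    finally show ?thesis .
  qed
  have ineq1: "(A + l) / (2 * D) \<le> (A / 2 + l) / D" using Dp l0 by (simp add: field_simps)
  show ?case
  proof (cases "R - T = {}")
    case True
    hence TR: "T = R" using T(1) by auto
    have "frob n (restr H R) \<le> (A / 2 + l1s H R) / D" using FT ineq1 TR l_def by simp
    moreover have "Bnorm1 n m a (restr H R) / real m \<le> (1 + \<gamma>) * ((A / 2 + l1s H R) / D)"
      using BT mult_left_mono[OF ineq1 g] TR l_def by simp
    ultimately show ?thesis unfolding D_def by simp
  next
    case False
    hence TR: "T \<noteq> R" by auto
    hence cT: "K \<le> card T + 1" using T(4) by auto
    hence "card T \<ge> 1" using K by simp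
    hence Tne: "T \<noteq> {}" by auto
    define R' where "R' = R - T"
    have cR: "card R' < card R" unfolding R'_def using finR T(1) Tne
      by (metis Diff_subset card_seteq finite_subset Diff_eq_empty_iff Diff_Diff_Int inf.absorb_iff2 psubsetI psubset_card_mono)
    have R'I: "R' \<subseteq> Ip n" using R(1) unfolding R'_def by auto
    have scR': "sc R'" using R(2) T(2) unfolding R'_def sc_def by auto
    have bnd: "\<forall>y\<in>R'. \<bar>vf H y\<bar> \<le> l / (real K - 1)"
    proof
      fix y assume y: "y \<in> R'"
      have "real (card T) * \<bar>vf H y\<bar> = (\<Sum>x\<in>T. \<bar>vf H y\<bar>)" by simp
      also have "\<dots> \<le> l" unfolding l_def l1s_def using T(5) y unfolding R'_def by (intro sum_mono) auto
      finally have "real (card T) * \<bar>vf H y\<bar> \<le> l" .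
      moreover have "(real K - 1) * \<bar>vf H y\<bar> \<le> real (card T) * \<bar>vf H y\<bar>"
        using cT by (intro mult_right_mono) auto
      ultimately have "(real K - 1) * \<bar>vf H y\<bar> \<le> l" by linarith
      thus "\<bar>vf H y\<bar> \<le> l / (real K - 1)" using Kr by (simp add: field_simps)
    qed
    have IH: "frob n (restr H R') \<le> (l / 2 + l1s H R') / D \<and>
      Bnorm1 n m a (restr H R') / real m \<le> (1 + \<gamma>) * ((l / 2 + l1s H R') / D)"
      using less.hyps[OF cR R'I scR' l0 bnd] unfolding D_def by simp
    have spl: "restr H R = (\<lambda>p q. restr H T p q + restr H R' p q)" unfolding R'_def by (rule restr_split[OF T(1)])
    have l1R: "l1s H R = l + l1s H R'" unfolding l_def R'_def by (rule l1s_split[OF finR T(1)])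
    have eq: "(A + l) / (2 * D) + (l / 2 + l1s H R') / D = (A / 2 + l1s H R) / D"
      using Dp l1R by (simp add: field_simps)
    have "frob n (restr H R) \<le> frob n (restr H T) + frob n (restr H R')"
      unfolding spl by (rule frob_add)
    hence F: "frob n (restr H R) \<le> (A / 2 + l1s H R) / D" using FT IH eq by linarith
    have "Bnorm1 n m a (restr H R) \<le> Bnorm1 n m a (restr H T) + Bnorm1 n m a (restr H R')"
      unfolding spl by (rule Bnorm1_add)
    hence "Bnorm1 n m a (restr H R) / real m \<le> Bnorm1 n m a (restr H T) / real m + Bnorm1 n m a (restr H R') / real m"
      by (simp add: divide_right_mono add_divide_distrib[symmetric])
    also have "\<dots> \<le> (1 + \<gamma>) * ((A + l) / (2 * D)) + (1 + \<gamma>) * ((l / 2 + l1s H R') / D)"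
      using BT IH by linarith
    also have "\<dots> = (1 + \<gamma>) * ((A / 2 + l1s H R) / D)" by (subst distrib_left[symmetric]) (simp only: eq)
    finally show ?thesis using F unfolding D_def by simp
  qed
qed

lemma alg:
  fixes F0 FR E ER ET L lL t t' K k gl gu G b e fH :: real
  assumes h1: "(1 - gl) * F0 \<le> ET" and h2: "ET \<le> E + ER" and h3: "ER \<le> (1 + gu) * (L / sqrt (K - 1))"
    and h4: "FR \<le> L / sqrt (K - 1)" and h5: "L \<le> lL + 2 * t'" and h6: "t' \<le> 2 * t"
    and h7: "lL \<le> sqrt k * F0" and h8: "E \<le> 2 * e"
    and cond: "(1 - gl) / sqrt 2 - (1 + gu) * sqrt (k / K) \<ge> b" and bp: "b > 0"
    and K2: "K \<ge> 2" and kK: "2 * k < K" and k0: "0 \<le> k" and gu0: "0 \<le> 1 + gu" and guG: "gu \<le> G"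
    and F00: "0 \<le> F0" and t0: "0 \<le> t" and e0: "0 \<le> e" and fH: "fH \<le> F0 + FR"
  shows "fH \<le> (8 * (1 + G) / b + 6) * t / sqrt K + 3 / b * e"
proof -
  define s2 where "s2 = sqrt 2"
  define D where "D = sqrt (K - 1)"
  define u where "u = 1 / D"
  define w where "w = 1 / sqrt K"
  define r where "r = sqrt k * u"
  define q where "q = sqrt k * w"
  have Dp: "D > 0" unfolding D_def using K2 by simp
  have Kp: "sqrt K > 0" using K2 by simp
  have s2p: "s2 > 0" unfolding s2_def by simp
  have u0: "u \<ge> 0" unfolding u_def using Dp by simp
  have w0: "w \<ge> 0" unfolding w_def using Kp by simp
  have sKD: "sqrt K \<le> s2 * D"
  proof -
    have "sqrt K \<le> sqrt (2 * (K - 1))" using K2 by (intro real_sqrt_le_mono) simp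
    thus ?thesis unfolding s2_def D_def by (metis real_sqrt_mult)
  qed
  have f1: "u \<le> s2 * w"
    unfolding u_def w_def using sKD Dp Kp s2p by (simp add: field_simps)
  have f2: "r \<le> s2 * q" unfolding r_def q_def using f1 mult_left_mono[OF f1, of "sqrt k"] k0
    by (simp add: mult.assoc mult.left_commute)
  have f3: "r \<le> 1"
  proof -
    have "sqrt k \<le> D" unfolding D_def using kK K2 by (intro real_sqrt_le_mono) simp
    thus ?thesis unfolding r_def u_def using Dp by simp
  qed
  have qdef: "sqrt (k / K) = q" unfolding q_def w_def by (simp add: real_sqrt_divide)
  have f4: "1 - gl \<ge> s2 * b + s2 * (1 + gu) * q"
  proof -
    have "s2 * b \<le> s2 * ((1 - gl) / s2 - (1 + gu) * q)" using cond qdef s2p s2_def by (intro mult_left_mono) auto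
    moreover have "s2 * ((1 - gl) / s2 - (1 + gu) * q) = (1 - gl) - s2 * (1 + gu) * q"
      using s2p by (simp add: field_simps)
    ultimately show ?thesis by (simp add: algebra_simps)
  qed
  have f5: "L * u \<le> r * F0 + 4 * t * u"
  proof -
    have "L \<le> sqrt k * F0 + 4 * t" using h5 h6 h7 by linarith
    hence "L * u \<le> (sqrt k * F0 + 4 * t) * u" using u0 by (intro mult_right_mono) auto
    thus ?thesis unfolding r_def by (simp add: algebra_simps)
  qed
  have Lu: "L / sqrt (K - 1) = L * u" unfolding u_def D_def by simp
  have f6: "(1 - gl) * F0 \<le> E + (1 + gu) * (r * F0 + 4 * t * u)"
  proof -
    have "(1 + gu) * (L * u) \<le> (1 + gu) * (r * F0 + 4 * t * u)" using f5 gu0 by (intro mult_left_mono)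
    moreover have "ER \<le> (1 + gu) * (L * u)" using h3 Lu by simp
    ultimately show ?thesis using h1 h2 by linarith
  qed
  have f7: "s2 * b * F0 \<le> E + 4 * (1 + gu) * t * u"
  proof -
    have a: "(1 + gu) * r * F0 \<le> s2 * (1 + gu) * q * F0"
      using mult_right_mono[OF mult_left_mono[OF f2 gu0] F00] by (simp add: algebra_simps)
    have "(s2 * b + s2 * (1 + gu) * q) * F0 \<le> (1 - gl) * F0" using f4 F00 by (intro mult_right_mono)
    thus ?thesis using a f6 by (simp add: algebra_simps)
  qed
  have f8: "fH \<le> 2 * F0 + 4 * t * u"
  proof -
    have "r * F0 \<le> F0" using mult_right_mono[OF f3 F00] by simp
    moreover have "FR \<le> L * u" using h4 Lu by simp
    ultimately show ?thesis using fH f5 by linarith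
  qed
  have f9: "F0 \<le> (E + 4 * (1 + gu) * t * u) / (s2 * b)"
    using f7 s2p bp by (simp add: field_simps)
  have s22: "s2 * s2 = 2" unfolding s2_def by simp
  have s2le: "s2 \<le> 3 / 2"
  proof -
    have "s2 \<le> sqrt ((3/2)^2)" unfolding s2_def by (intro real_sqrt_le_mono) (simp add: power2_eq_square)
    thus ?thesis by simp
  qed
  have two: "2 * F0 \<le> s2 * E / b + 4 * s2 * (1 + gu) * t * u / b"
  proof -
    have "2 * F0 \<le> 2 * ((E + 4 * (1 + gu) * t * u) / (s2 * b))" using f9 by linarith
    also have "\<dots> = s2 * (E + 4 * (1 + gu) * t * u) / b"
    proof -
      have "2 * (X / (s2 * b)) = (s2 * s2) * X / (s2 * b)" for X using s22 by simp
      also have "\<dots> X = s2 * X / b" for X using s2p bp by simp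
      finally show ?thesis .
    qed
    finally show ?thesis by (simp add: add_divide_distrib algebra_simps)
  qed
  have b1: "s2 * E / b \<le> 3 / b * e"
  proof -
    have "s2 * E \<le> s2 * (2 * e)" using h8 s2p by (intro mult_left_mono) auto
    also have "\<dots> = (2 * s2) * e" by simp
    also have "\<dots> \<le> 3 * e" using s2le e0 by (intro mult_right_mono) auto
    finally show ?thesis using bp by (simp add: divide_right_mono)
  qed
  have b2: "4 * s2 * (1 + gu) * t * u / b \<le> 8 * (1 + G) * t * w / b"
  proof -
    have "s2 * u \<le> s2 * (s2 * w)" using f1 s2p by (intro mult_left_mono) auto
    hence su: "s2 * u \<le> 2 * w" using s22 by (simp add: mult.assoc[symmetric])
    have "(1 + gu) * (s2 * u) \<le> (1 + G) * (2 * w)"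
    proof -
      have G1: "1 + gu \<le> 1 + G" using guG by simp
      have G2: "0 \<le> 1 + G" using guG gu0 by simp
      have su0: "0 \<le> s2 * u" using s2p u0 by simp
      show ?thesis by (rule mult_mono[OF G1 su G2 su0])
    qed
    hence "4 * t * ((1 + gu) * (s2 * u)) \<le> 4 * t * ((1 + G) * (2 * w))" using t0 by (intro mult_left_mono) auto
    hence "4 * s2 * (1 + gu) * t * u \<le> 8 * (1 + G) * t * w" by (simp add: algebra_simps)
    thus ?thesis using bp by (simp add: divide_right_mono)
  qed
  have b3: "4 * t * u \<le> 6 * t * w"
  proof -
    have "u \<le> 3 / 2 * w" using f1 s2le w0 mult_right_mono[OF s2le w0] by linarith
    hence "4 * t * u \<le> 4 * t * (3 / 2 * w)" using t0 by (intro mult_left_mono) auto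
    thus ?thesis by simp
  qed
  have "fH \<le> 3 / b * e + 8 * (1 + G) * t * w / b + 6 * t * w" using f8 two b1 b2 b3 by linarith
  also have "\<dots> = (8 * (1 + G) / b + 6) * t / sqrt K + 3 / b * e" unfolding w_def using bp Kp by (simp add: field_simps)
  finally show ?thesis .
qed

lemma sum_pairs: fixes g :: "nat \<Rightarrow> real" and m :: nat shows "(\<Sum>i=1..m. g (2*i-1) + g (2*i)) = (\<Sum>j=1..2*m. (g j :: real))"
proof (induction m)
  case 0 show ?case by simp
next
  case (Suc m)
  have e: "2 * Suc m = Suc (Suc (2 * m))" by simp
  show ?case unfolding e using Suc by (simp add: sum.cl_ivl_Suc)
qed

lemma Bn_H_bound:
  assumes "(\<Sum>i = 1..2 * m. \<bar>y i - Aop n a S i\<bar>) \<le> eps" "(\<Sum>i = 1..2 * m. \<bar>y i - Aop n a Shat i\<bar>) \<le> eps"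
  shows "Bnorm1 n m a (\<lambda>p q. Shat p q - S p q) \<le> 2 * eps"
proof -
  let ?H = "\<lambda>p q. Shat p q - S p q"
  have "Bnorm1 n m a ?H \<le> (\<Sum>i=1..m. \<bar>Aop n a ?H (2*i-1)\<bar> + \<bar>Aop n a ?H (2*i)\<bar>)"
    unfolding Bnorm1_def Bop_def by (intro sum_mono abs_triangle_ineq4)
  also have "\<dots> = (\<Sum>j=1..2*m. \<bar>Aop n a ?H j\<bar>)" by (rule sum_pairs)
  also have "\<dots> \<le> (\<Sum>j=1..2*m. \<bar>y j - Aop n a S j\<bar> + \<bar>y j - Aop n a Shat j\<bar>)"
    unfolding Aop_diff by (intro sum_mono) linarith
  also have "\<dots> \<le> 2 * eps" using assms by (simp add: sum.distrib)
  finally show ?thesis .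
qed

definition Gam :: "(nat \<Rightarrow> real) \<Rightarrow> real" where
  "Gam gu = (if bdd_above (range gu) then max 0 (Sup (range gu)) else 0)"

lemma Gam_nonneg: "0 \<le> Gam gu" unfolding Gam_def by simp

lemma rip_ub_const: assumes "n * n \<le> j" shows "rip_ub n m a j = rip_ub n m a (n * n)"
proof -
  have "\<And>X. nnz n X \<le> j" "\<And>X. nnz n X \<le> n * n" using nnz_le assms le_trans by blast+
  thus ?thesis unfolding rip_ub_def by simp
qed

lemma Gam_ub: "rip_ub n m a j \<le> Gam (rip_ub n m a)"
proof -
  have "range (rip_ub n m a) \<subseteq> rip_ub n m a ` {..n*n}"
  proof
    fix x assume "x \<in> range (rip_ub n m a)"
    then obtain i where i: "x = rip_ub n m a i" by auto
    show "x \<in> rip_ub n m a ` {..n*n}"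
    proof (cases "i \<le> n * n")
      case True thus ?thesis using i by auto
    next
      case False thus ?thesis using i rip_ub_const[of n i m a] by auto
    qed
  qed
  hence bdd: "bdd_above (range (rip_ub n m a))" by (meson bdd_above_finite bdd_above_mono finite_atMost finite_imageI)
  hence "rip_ub n m a j \<le> Sup (range (rip_ub n m a))" by (intro cSup_upper) auto
  thus ?thesis unfolding Gam_def using bdd by simp
qed

lemma vf_swap: assumes "symm n S" "x \<in> Ip n" shows "vf S (prod.swap x) = vf S x"
  using assms unfolding symm_def vf_def Ip_def by (cases x) auto

lemma Lam_sc: assumes "Om \<subseteq> Ip n" shows "sc {x\<in>Om. prod.swap x \<in> Om}"
  unfolding sc_def by auto

lemma Lam_tail:
  assumes "Om \<subseteq> Ip n" "symm n S"
  shows "l1s S (Ip n - {x\<in>Om. prod.swap x \<in> Om}) \<le> 2 * l1s S (Ip n - Om)"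
proof -
  define L where "L = {x\<in>Om. prod.swap x \<in> Om}"
  define U where "U = Om - L"
  have dec: "Ip n - L = (Ip n - Om) \<union> U" unfolding U_def L_def using assms(1) by auto
  have finU: "finite U" unfolding U_def using assms(1) finite_subset by (metis Diff_subset finite_Ip finite_Diff)
  have "l1s S (Ip n - L) = l1s S (Ip n - Om) + l1s S U"
    unfolding dec l1s_def by (rule sum.union_disjoint) (use finU in \<open>auto simp: U_def\<close>)
  moreover have "l1s S U \<le> l1s S (Ip n - Om)"
  proof -
    have "l1s S U = (\<Sum>x\<in>U. \<bar>vf S (prod.swap x)\<bar>)" unfolding l1s_def
      using vf_swap[OF assms(2)] assms(1) by (intro sum.cong) (auto simp: U_def)
    also have "\<dots> = (\<Sum>x\<in>prod.swap ` U. \<bar>vf S x\<bar>)"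
      by (subst sum.reindex) (auto simp: inj_on_def)
    also have "\<dots> \<le> (\<Sum>x\<in>Ip n - Om. \<bar>vf S x\<bar>)"
    proof (rule sum_mono2)
      show "prod.swap ` U \<subseteq> Ip n - Om" unfolding U_def L_def using assms(1) by (auto simp: Ip_def)
    qed auto
    finally show ?thesis unfolding l1s_def .
  qed
  ultimately show ?thesis unfolding L_def by linarith
qed

lemma cone:
  assumes "l1s Shat (Ip n) \<le> l1s S (Ip n)" "L \<subseteq> Ip n"
  shows "l1s (\<lambda>p q. Shat p q - S p q) (Ip n - L) \<le> l1s (\<lambda>p q. Shat p q - S p q) L + 2 * l1s S (Ip n - L)"
proof -
  let ?H = "\<lambda>p q. Shat p q - S p q"
  have vH: "vf Shat x = vf S x + vf ?H x" for x by (simp add: vf_def)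
  have a: "l1s Shat L \<ge> l1s S L - l1s ?H L"
  proof -
    have "(\<Sum>x\<in>L. \<bar>vf S x\<bar> - \<bar>vf ?H x\<bar>) \<le> (\<Sum>x\<in>L. \<bar>vf Shat x\<bar>)"
      by (intro sum_mono) (unfold vf_def, arith)
    thus ?thesis unfolding l1s_def by (simp add: sum_subtractf)
  qed
  have b: "l1s Shat (Ip n - L) \<ge> l1s ?H (Ip n - L) - l1s S (Ip n - L)"
  proof -
    have "(\<Sum>x\<in>Ip n - L. \<bar>vf ?H x\<bar> - \<bar>vf S x\<bar>) \<le> (\<Sum>x\<in>Ip n - L. \<bar>vf Shat x\<bar>)"
      by (intro sum_mono) (unfold vf_def, arith)
    thus ?thesis unfolding l1s_def by (simp add: sum_subtractf)
  qed
  have "l1s Shat (Ip n) = l1s Shat L + l1s Shat (Ip n - L)" by (rule l1s_split[OF finite_Ip assms(2)])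
  moreover have "l1s S (Ip n) = l1s S L + l1s S (Ip n - L)" by (rule l1s_split[OF finite_Ip assms(2)])
  ultimately show ?thesis using a b assms(1) by linarith
qed

lemma main:
  assumes psdS: "psd n S" and bk: "best_k_sparse n k S SOm"
    and eta: "(\<Sum>i = 1..2 * m. \<bar>eta i\<bar>) \<le> eps1"
    and yd: "\<forall>i \<in> {1..2 * m}. y i = Aop n a S i + eta i"
    and fe: "feasible n m a y eps1 Shat"
    and opt: "\<forall>M. feasible n m a y eps1 M \<longrightarrow> entry_l1 n Shat \<le> entry_l1 n M"
    and kK: "2 * k < K2"
    and cond: "(1 - rip_lb n m a (k + K2)) / sqrt 2 - (1 + rip_ub n m a K2) * sqrt (real k / real K2) \<ge> beta2"
    and bp: "0 < beta2"
  shows "frob n (\<lambda>p q. Shat p q - S p q) \<le> (8 * (1 + Gam (rip_ub n m a)) / beta2 + 6) *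
      entry_l1 n (\<lambda>p q. S p q - SOm p q) / sqrt (real K2) + 3 / beta2 * (eps1 / real m)"
proof -
  define H where "H = (\<lambda>p q. Shat p q - S p q)"
  define t where "t = entry_l1 n (\<lambda>p q. S p q - SOm p q)"
  define G where "G = Gam (rip_ub n m a)"
  obtain Om where Om0: "Om \<subseteq> {..<n} \<times> {..<n} \<and> card Om = min k (n * n) \<and>
      (\<forall>(p, q) \<in> Om. \<forall>(p', q') \<in> ({..<n} \<times> {..<n}) - Om. \<bar>S p' q'\<bar> \<le> \<bar>S p q\<bar>) \<and>
      (\<forall>p q. SOm p q = (if (p, q) \<in> Om then S p q else 0))"
    using bk unfolding best_k_sparse_def by (elim exE)
  have Om1: "Om \<subseteq> Ip n" using conjunct1[OF Om0] unfolding Ip_def .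
  have Om2: "card Om = min k (n * n)" using conjunct1[OF conjunct2[OF Om0]] .
  have Om3: "\<forall>p q. SOm p q = (if (p, q) \<in> Om then S p q else 0)" using conjunct2[OF conjunct2[OF conjunct2[OF Om0]]] .
  note Om = Om1 Om2 Om3
  have t_eq: "t = l1s S (Ip n - Om)"
  proof -
    have "t = l1s (restr S (- Om)) (Ip n)" unfolding t_def l1_sum l1s_def
      by (intro sum.cong) (auto simp: vf_def restr_def Om(3))
    also have "\<dots> = l1s S (Ip n - Om)" by (simp add: l1s_restr Diff_eq)
    finally show ?thesis .
  qed
  have "0 \<le> (\<Sum>i = 1..2 * m. \<bar>eta i\<bar>)" by (simp add: sum_nonneg)
  hence e0: "0 \<le> eps1" using eta by linarith
  have t0: "0 \<le> t" unfolding t_eq by (rule l1s_nonneg)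
  have G0: "0 \<le> G" unfolding G_def by (rule Gam_nonneg)
  have em0: "0 \<le> eps1 / real m" using e0 by simp
  have P1: "0 \<le> 8 * (1 + G) / beta2 * t / sqrt (real K2)" using G0 bp t0 by simp
  have P2: "0 \<le> 3 / beta2 * (eps1 / real m)" using bp em0 by (intro mult_nonneg_nonneg) auto
  have rhs: "(8 * (1 + G) / beta2 + 6) * t / sqrt (real K2) + 3 / beta2 * (eps1 / real m)
      = 8 * (1 + G) / beta2 * t / sqrt (real K2) + 6 * t / sqrt (real K2) + 3 / beta2 * (eps1 / real m)"
    by (simp add: algebra_simps add_divide_distrib)
  have Sfeas: "feasible n m a y eps1 S"
  proof -
    have "(\<Sum>i = 1..2 * m. \<bar>y i - Aop n a S i\<bar>) = (\<Sum>i = 1..2 * m. \<bar>eta i\<bar>)"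
      using yd by (intro sum.cong) auto
    thus ?thesis unfolding feasible_def using psdS eta by simp
  qed
  have l1opt: "entry_l1 n Shat \<le> entry_l1 n S" using opt Sfeas by blast
  have Hsym: "symm n H" using psdS fe unfolding feasible_def psd_def symm_def H_def by auto
  have SShat: "(\<Sum>i = 1..2 * m. \<bar>y i - Aop n a Shat i\<bar>) \<le> eps1" using fe unfolding feasible_def by simp
  have SS: "(\<Sum>i = 1..2 * m. \<bar>y i - Aop n a S i\<bar>) \<le> eps1" using Sfeas unfolding feasible_def by simp
  have BnH: "Bnorm1 n m a H \<le> 2 * eps1" unfolding H_def by (rule Bn_H_bound[OF SS SShat])
  have goal: "frob n H \<le> (8 * (1 + G) / beta2 + 6) * t / sqrt (real K2) + 3 / beta2 * (eps1 / real m)"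
  proof (cases "n = 0 \<or> K2 = 1")
    case True
    show ?thesis
    proof (cases "n = 0")
      case True
      hence "frob n H = 0" unfolding frob_def by simp
      thus ?thesis using P1 P2 t0 rhs by simp
    next
      case False
      hence K1: "K2 = 1" using \<open>n = 0 \<or> K2 = 1\<close> by simp
      hence k0: "k = 0" using kK by simp
      have "finite Om" by (rule finite_subset[OF Om(1) finite_Ip])
      hence "Om = {}" using Om(2) k0 by simp
      hence tS: "t = entry_l1 n S" unfolding t_eq by (simp add: l1_sum)
      have "frob n H \<le> entry_l1 n H" unfolding frob_L2 l1_sum l1s_def by (rule L2_set_le_sum_abs)
      also have "\<dots> \<le> entry_l1 n Shat + entry_l1 n S" unfolding l1_sum l1s_def H_def vf_def
        by (simp add: sum.distrib[symmetric] sum_mono abs_triangle_ineq4)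
      also have "\<dots> \<le> 2 * t" using l1opt tS by simp
      finally have "frob n H \<le> 2 * t" .
      thus ?thesis using rhs P1 P2 t0 K1 by simp
    qed
  next
    case False
    hence n0: "n > 0" and K2: "K2 \<ge> 2" using kK by auto
    define gl where "gl = rip_lb n m a (k + K2)"
    define gu where "gu = rip_ub n m a K2"
    have gu0: "0 \<le> 1 + gu"
    proof -
      define X0 :: "nat \<Rightarrow> nat \<Rightarrow> real" where "X0 = (\<lambda>p q. if p = 0 \<and> q = 0 then 1 else 0)"
      have sX: "symm n X0" unfolding symm_def X0_def by auto
      have "nnz n X0 \<le> card {(0::nat, 0::nat)}" unfolding nnz_def X0_def
        by (intro card_mono) (auto split: if_splits)
      hence nX: "nnz n X0 \<le> K2" using K2 by simp
      have f1: "1 \<le> frob n X0" using abs_le_frob[OF n0 n0, of X0] by (simp add: X0_def)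
      have "0 \<le> Bnorm1 n m a X0 / real m" by (simp add: Bnorm1_nonneg)
      also have "\<dots> \<le> (1 + gu) * frob n X0" unfolding gu_def by (rule rip_ub_prop[OF sX nX])
      finally have "0 \<le> (1 + gu) * frob n X0" .
      thus ?thesis using f1 by (simp add: zero_le_mult_iff)
    qed
    have guG: "gu \<le> G" unfolding gu_def G_def by (rule Gam_ub)
    define Lam where "Lam = {x\<in>Om. prod.swap x \<in> Om}"
    have LamI: "Lam \<subseteq> Ip n" using Om(1) unfolding Lam_def by auto
    have scL: "sc Lam" unfolding Lam_def by (rule Lam_sc[OF Om(1)])
    have finOm: "finite Om" by (rule finite_subset[OF Om(1) finite_Ip])
    have cL: "card Lam \<le> k"
    proof -
      have "card Lam \<le> card Om" unfolding Lam_def using finOm by (intro card_mono) auto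
      thus ?thesis using Om(2) by simp
    qed
    define t' where "t' = l1s S (Ip n - Lam)"
    have Ssym: "symm n S" using psdS unfolding psd_def by simp
    have tt: "t' \<le> 2 * t" unfolding t'_def t_eq Lam_def by (rule Lam_tail[OF Om(1) Ssym])
    have l1ineq: "l1s Shat (Ip n) \<le> l1s S (Ip n)" using l1opt by (simp add: l1_sum)
    have conev: "l1s H (Ip n - Lam) \<le> l1s H Lam + 2 * t'"
      unfolding H_def t'_def by (rule cone[OF l1ineq LamI])
    define Rc where "Rc = Ip n - Lam"
    have finRc: "finite Rc" unfolding Rc_def by simp
    have scIp: "sc (Ip n)" unfolding sc_def Ip_def by auto
    have scRc: "sc Rc" using scIp scL unfolding Rc_def sc_def by auto
    have fsym: "\<And>p q. (p, q) \<in> Rc \<Longrightarrow> \<bar>vf H (q, p)\<bar> = \<bar>vf H (p, q)\<bar>"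
      using Hsym unfolding Rc_def symm_def vf_def Ip_def by auto
    obtain T1 where T1: "T1 \<subseteq> Rc" "sc T1" "card T1 \<le> K2" "T1 = Rc \<or> K2 \<le> card T1 + 1"
      "\<forall>x\<in>T1. \<forall>y\<in>Rc-T1. \<bar>vf H y\<bar> \<le> \<bar>vf H x\<bar>"
      using top_sel[OF finRc scRc, of "\<lambda>x. \<bar>vf H x\<bar>" K2] fsym by blast
    define T01 where "T01 = Lam \<union> T1"
    have T01I: "T01 \<subseteq> Ip n" unfolding T01_def using LamI T1(1) unfolding Rc_def by auto
    have scT01: "sc T01" using scL T1(2) unfolding T01_def sc_def by auto
    have finL: "finite Lam" by (rule finite_subset[OF LamI finite_Ip])
    have cT01: "card T01 \<le> k + K2" unfolding T01_def using card_Un_le[of Lam T1] cL T1(3) by linarith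
    define R' where "R' = Rc - T1"
    have R'I: "R' \<subseteq> Ip n" unfolding R'_def Rc_def by auto
    have scR': "sc R'" using scRc T1(2) unfolding R'_def sc_def by auto
    define A where "A = l1s H T1"
    have A0: "0 \<le> A" unfolding A_def by (rule l1s_nonneg)
    have Kr: "real K2 - 1 > 0" using K2 by simp
    have bnd: "\<forall>y\<in>R'. \<bar>vf H y\<bar> \<le> A / (real K2 - 1)"
    proof
      fix y assume y: "y \<in> R'"
      hence "T1 \<noteq> Rc" unfolding R'_def by auto
      hence cT: "K2 \<le> card T1 + 1" using T1(4) by auto
      have "real (card T1) * \<bar>vf H y\<bar> = (\<Sum>x\<in>T1. \<bar>vf H y\<bar>)" by simp
      also have "\<dots> \<le> A" unfolding A_def l1s_def using T1(5) y unfolding R'_def by (intro sum_mono) auto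
      finally have "real (card T1) * \<bar>vf H y\<bar> \<le> A" .
      moreover have "(real K2 - 1) * \<bar>vf H y\<bar> \<le> real (card T1) * \<bar>vf H y\<bar>"
        using cT by (intro mult_right_mono) auto
      ultimately have "(real K2 - 1) * \<bar>vf H y\<bar> \<le> A" by linarith
      thus "\<bar>vf H y\<bar> \<le> A / (real K2 - 1)" using Kr by (simp add: field_simps)
    qed
    have ch: "frob n (restr H R') \<le> (A / 2 + l1s H R') / sqrt (real K2 - 1) \<and>
      Bnorm1 n m a (restr H R') / real m \<le> (1 + gu) * ((A / 2 + l1s H R') / sqrt (real K2 - 1))"
      by (rule chain[OF K2 Hsym gu0 _ R'I scR' A0 bnd]) (unfold gu_def, rule rip_ub_prop)
    define L where "L = l1s H Rc"
    have LA: "L = A + l1s H R'" unfolding L_def A_def R'_def by (rule l1s_split[OF finRc T1(1)])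
    have Dp: "sqrt (real K2 - 1) > 0" using Kr by simp
    have AL: "(A / 2 + l1s H R') / sqrt (real K2 - 1) \<le> L / sqrt (real K2 - 1)"
      using LA A0 Dp by (intro divide_right_mono) auto
    have h4: "frob n (restr H R') \<le> L / sqrt (real K2 - 1)" using ch AL by linarith
    have h3: "Bnorm1 n m a (restr H R') / real m \<le> (1 + gu) * (L / sqrt (real K2 - 1))"
      using ch mult_left_mono[OF AL gu0] by linarith
    define F0 where "F0 = frob n (restr H T01)"
    have F00: "0 \<le> F0" unfolding F0_def by (rule frob_nonneg)
    have h7: "l1s H Lam \<le> sqrt (real k) * F0"
    proof -
      have "l1s H Lam = (\<Sum>x\<in>Lam. \<bar>vf H x\<bar> * \<bar>1\<bar>)" unfolding l1s_def by simp
      also have "\<dots> \<le> L2_set (vf H) Lam * L2_set (\<lambda>_. 1) Lam" by (rule L2_set_mult_ineq)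
      also have "L2_set (\<lambda>_. 1) Lam = sqrt (real (card Lam))" by (simp add: L2_set_constant)
      also have "L2_set (vf H) Lam \<le> F0"
      proof -
        have "(\<Sum>x\<in>Lam. (vf H x)^2) \<le> (\<Sum>x\<in>T01. (vf H x)^2)"
          using finite_subset[OF T01I finite_Ip] by (intro sum_mono2) (auto simp: T01_def)
        hence "L2_set (vf H) Lam \<le> L2_set (vf H) T01" unfolding L2_set_def by (rule real_sqrt_le_mono)
        thus ?thesis unfolding F0_def frob_restr[OF T01I] .
      qed
      hence "L2_set (vf H) Lam * sqrt (real (card Lam)) \<le> F0 * sqrt (real k)"
        using cL F00 by (intro mult_mono) auto
      finally show ?thesis by (simp add: mult.commute)
    qed
    have h1: "(1 - gl) * F0 \<le> Bnorm1 n m a (restr H T01) / real m" unfolding F0_def gl_def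
      by (rule rip_lb_prop[OF symm_restr[OF Hsym scT01]]) (rule order_trans[OF nnz_restr[OF T01I] cT01])
    have IpSplit: "\<And>p q. p < n \<Longrightarrow> q < n \<Longrightarrow> (p, q) \<in> T01 \<or> (p, q) \<in> R'"
      unfolding T01_def R'_def Rc_def Ip_def by auto
    have disj: "\<And>x. x \<in> T01 \<Longrightarrow> x \<notin> R'" unfolding T01_def R'_def Rc_def by auto
    have eqT: "Bnorm1 n m a (restr H T01) = Bnorm1 n m a (\<lambda>p q. H p q - restr H R' p q)"
      by (rule Bnorm1_cong) (use IpSplit disj in \<open>auto simp: restr_def\<close>)
    have h2': "Bnorm1 n m a (restr H T01) \<le> Bnorm1 n m a H + Bnorm1 n m a (restr H R')"
      unfolding eqT by (rule Bnorm1_diff)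
    have h2: "Bnorm1 n m a (restr H T01) / real m \<le> Bnorm1 n m a H / real m + Bnorm1 n m a (restr H R') / real m"
      using divide_right_mono[OF h2', of "real m"] by (simp add: add_divide_distrib)
    have h8: "Bnorm1 n m a H / real m \<le> 2 * (eps1 / real m)"
      using divide_right_mono[OF BnH, of "real m"] by simp
    have eqH: "frob n H = frob n (\<lambda>p q. restr H T01 p q + restr H R' p q)"
      by (rule frob_cong) (use IpSplit disj in \<open>auto simp: restr_def\<close>)
    have fH: "frob n H \<le> F0 + frob n (restr H R')" unfolding eqH F0_def by (rule frob_add)
    have h5: "L \<le> l1s H Lam + 2 * t'" using conev unfolding L_def Rc_def .
    have kKr: "2 * real k < real K2" using kK by simp
    have K2r: "real K2 \<ge> 2" using K2 by simp
    show ?thesis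
      by (rule alg[OF h1 h2 h3 h4 h5 tt h7 h8 cond[folded gl_def gu_def] bp K2r kKr _ gu0 guG F00 t0 em0 fH]) simp
  qed
  show ?thesis using goal unfolding H_def t_def G_def .
qed

theorem lemma2:
  "\<exists>C1 C2 C3 :: (nat \<Rightarrow> real) \<Rightarrow> (nat \<Rightarrow> real) \<Rightarrow> real.
     (\<forall>gl gu. 0 < C1 gl gu \<and> 0 < C2 gl gu \<and> 0 < C3 gl gu) \<and>
     (\<forall>(n::nat) (m::nat) (a :: nat \<Rightarrow> nat \<Rightarrow> real) (k::nat) (K2::nat)
        (S :: nat \<Rightarrow> nat \<Rightarrow> real) (SOm :: nat \<Rightarrow> nat \<Rightarrow> real)
        (eta :: nat \<Rightarrow> real) (eps1::real) (y :: nat \<Rightarrow> real)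
        (Shat :: nat \<Rightarrow> nat \<Rightarrow> real) (beta2::real).
        psd n S \<and> best_k_sparse n k S SOm \<and>
        (\<Sum>i = 1..2 * m. \<bar>eta i\<bar>) \<le> eps1 \<and>
        (\<forall>i \<in> {1..2 * m}. y i = Aop n a S i + eta i) \<and>
        feasible n m a y eps1 Shat \<and>
        (\<forall>M. feasible n m a y eps1 M \<longrightarrow> entry_l1 n Shat \<le> entry_l1 n M) \<and>
        2 * k < K2 \<and>
        (1 - rip_lb n m a (k + K2)) / sqrt 2 - (1 + rip_ub n m a K2) * sqrt (real k / real K2) \<ge> beta2 \<and>
        0 < beta2
      \<longrightarrow> frob n (\<lambda>p q. Shat p q - S p q)
          \<le> (C1 (rip_lb n m a) (rip_ub n m a) / beta2 + C3 (rip_lb n m a) (rip_ub n m a))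
              * entry_l1 n (\<lambda>p q. S p q - SOm p q) / sqrt (real K2)
            + C2 (rip_lb n m a) (rip_ub n m a) / beta2 * (eps1 / real m))"
    apply (rule exI[of _ "\<lambda>gl gu. 8 * (1 + Gam gu)"])
  apply (rule exI[of _ "\<lambda>gl gu. 3"])
  apply (rule exI[of _ "\<lambda>gl gu. 6"])
  apply (intro conjI allI impI)
  subgoal for gl gu using Gam_nonneg[of gu] by simp
  apply simp
  apply simp
  apply (elim conjE)
  apply (rule main)
  apply assumption+
  done

end
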